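(* For $n\ge 2$, $g(n)\ge \left\lceil\frac{(n-1)^2+1}{2}\right\rceil$.
   Context: $K_n$ is the complete graph on $n$ vertices. A complete bipartite subgraph of a graph $G$ has two disjoint nonempty vertex classes $X,Y$ and edge set all $xy$ with $x\in X,y\in Y$. A block is a set $E(B_1)\times E(B_2)$ where $B_1,B_2$ are complete bipartite subgraphs of $K_n$; $g(n)$ is the minimum number of blocks partitioning $E(K_n)\times E(K_n)$. *)

theory Defs
  imports Complex_Main
begin

definition Kn_edges :: "nat \<Rightarrow> nat set set" where
  "Kn_edges n = {e. \<exists>x y. x < n \<and> y < n \<and> x \<noteq> y \<and> e = {x, y}}"

definition bip_edges :: "nat set \<Rightarrow> nat set \<Rightarrow> nat set set" where
  "bip_edges X Y = {{x, y} | x y. x \<in> X \<and> y \<in> Y}"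

definition is_cbs :: "nat \<Rightarrow> nat set set \<Rightarrow> bool" where
  "is_cbs n F \<longleftrightarrow> (\<exists>X Y. X \<subseteq> {..<n} \<and> Y \<subseteq> {..<n} \<and> X \<noteq> {} \<and> Y \<noteq> {}
      \<and> X \<inter> Y = {} \<and> F = bip_edges X Y)"

definition is_block :: "nat \<Rightarrow> (nat set \<times> nat set) set \<Rightarrow> bool" where
  "is_block n B \<longleftrightarrow> (\<exists>F1 F2. is_cbs n F1 \<and> is_cbs n F2 \<and> B = F1 \<times> F2)"

definition block_partition :: "nat \<Rightarrow> (nat set \<times> nat set) set set \<Rightarrow> bool" where
  "block_partition n P \<longleftrightarrow> finite P \<and> (\<forall>B\<in>P. is_block n B) \<and>
     (\<forall>B1\<in>P. \<forall>B2\<in>P. B1 \<noteq> B2 \<longrightarrow> B1 \<inter> B2 = {}) \<and>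
     \<Union>P = Kn_edges n \<times> Kn_edges n"

definition g :: "nat \<Rightarrow> nat" where
  "g n = (LEAST k. \<exists>P. block_partition n P \<and> card P = k)"

end

theory Submission imports Defs begin

lemma underdet_aux:
  fixes cs :: "('a \<Rightarrow> real) list"
  shows "length cs = m \<Longrightarrow> finite S \<Longrightarrow> length cs < card S \<Longrightarrow>
    \<exists>x. (\<exists>j\<in>S. x j \<noteq> 0) \<and> (\<forall>c\<in>set cs. (\<Sum>j\<in>S. c j * x j) = 0)"
proof (induction m arbitrary: cs S)
  case 0
  then obtain j where "j \<in> S" by (metis card.empty ex_in_conv less_irrefl list.size(3))
  then show ?case using 0 by (intro exI[of _ "\<lambda>_. 1"]) auto
next
  case (Suc m)
  then obtain c cs0 where cs: "cs = c # cs0" and len: "length cs0 = m" by (cases cs) auto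
  show ?case
  proof (cases "\<forall>j\<in>S. c j = 0")
    case True
    from Suc.IH[of cs0 S] Suc.prems len cs obtain x where "\<exists>j\<in>S. x j \<noteq> 0" "\<forall>d\<in>set cs0. (\<Sum>j\<in>S. d j * x j) = 0" by auto
    then show ?thesis using True cs by (intro exI[of _ x]) auto
  next
    case False
    then obtain k where k: "k \<in> S" "c k \<noteq> 0" by auto
    define cs' where "cs' = map (\<lambda>d j. d j - d k * c j / c k) cs0"
    have "length cs' < card (S - {k})" using Suc.prems k cs by (simp add: cs'_def)
    moreover have "length cs' = m" using len by (simp add: cs'_def)
    ultimately obtain x where x1: "\<exists>j\<in>S-{k}. x j \<noteq> 0" and x2: "\<forall>d\<in>set cs'. (\<Sum>j\<in>S-{k}. d j * x j) = 0"
      using Suc.IH[of cs' "S-{k}"] Suc.prems by auto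
    define x' where "x' = x(k := - (\<Sum>j\<in>S-{k}. c j * x j) / c k)"
    have sumS: "(\<Sum>j\<in>S. d j * x' j) = d k * x' k + (\<Sum>j\<in>S-{k}. d j * x j)" for d
    proof -
      have "(\<Sum>j\<in>S. d j * x' j) = d k * x' k + (\<Sum>j\<in>S-{k}. d j * x' j)"
        using sum.remove[OF Suc.prems(2) k(1)] by blast
      also have "(\<Sum>j\<in>S-{k}. d j * x' j) = (\<Sum>j\<in>S-{k}. d j * x j)"
        by (rule sum.cong) (auto simp: x'_def)
      finally show ?thesis .
    qed
    show ?thesis
    proof (intro exI[of _ x'] conjI ballI)
      show "\<exists>j\<in>S. x' j \<noteq> 0" using x1 by (auto simp: x'_def)
      fix d assume "d \<in> set cs"
      then consider "d = c" | "d \<in> set cs0" using cs by auto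
      then show "(\<Sum>j\<in>S. d j * x' j) = 0"
      proof cases
        case 1
        show ?thesis unfolding 1 sumS using k by (simp add: x'_def)
      next
        case 2
        then have "(\<lambda>j. d j - d k * c j / c k) \<in> set cs'" by (auto simp: cs'_def)
        from bspec[OF x2 this] have "(\<Sum>j\<in>S-{k}. (d j - d k * c j / c k) * x j) = 0" by simp
        then have "(\<Sum>j\<in>S-{k}. d j * x j) - d k / c k * (\<Sum>j\<in>S-{k}. c j * x j) = 0"
          by (simp add: algebra_simps sum_subtractf sum_distrib_left)
        then show ?thesis unfolding sumS using k by (simp add: x'_def field_simps)
      qed
    qed
  qed
qed

lemma underdet:
  fixes cs :: "('a \<Rightarrow> real) list"
  assumes "finite S" "length cs < card S"
  shows "\<exists>x. (\<exists>j\<in>S. x j \<noteq> 0) \<and> (\<forall>c\<in>set cs. (\<Sum>j\<in>S. c j * x j) = 0)"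
  using underdet_aux assms by blast

lemma bip_ind:
  assumes "X \<inter> Y = {}"
  shows "(of_bool ({a,c} \<in> bip_edges X Y) :: real) = of_bool (a\<in>X) * of_bool (c\<in>Y) + of_bool (a\<in>Y) * of_bool (c\<in>X)"
proof -
  have "({a,c} \<in> bip_edges X Y) \<longleftrightarrow> (a\<in>X \<and> c\<in>Y) \<or> (a\<in>Y \<and> c\<in>X)"
    unfolding bip_edges_def by (auto simp: doubleton_eq_iff)
  then show ?thesis using assms by auto
qed

lemma kn_mem: "a < n \<Longrightarrow> c < n \<Longrightarrow> ({a,c} \<in> Kn_edges n) = (a \<noteq> c)"
  unfolding Kn_edges_def by (auto simp: doubleton_eq_iff)

lemma quad4:
  fixes v f1 f2 f3 f4 g1 g2 g3 g4 :: "'a \<Rightarrow> real"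
  shows
  "(\<Sum>u\<in>I. \<Sum>w\<in>I. v u * v w * (f1 u * g1 w + f2 u * g2 w + f3 u * g3 w + f4 u * g4 w)) =
   (\<Sum>u\<in>I. f1 u * v u) * (\<Sum>w\<in>I. g1 w * v w) + (\<Sum>u\<in>I. f2 u * v u) * (\<Sum>w\<in>I. g2 w * v w)
 + (\<Sum>u\<in>I. f3 u * v u) * (\<Sum>w\<in>I. g3 w * v w) + (\<Sum>u\<in>I. f4 u * v u) * (\<Sum>w\<in>I. g4 w * v w)"
  (is "?L = ?R")
proof -
  have "?R = (\<Sum>u\<in>I. \<Sum>w\<in>I. (f1 u * v u) * (g1 w * v w) + (f2 u * v u) * (g2 w * v w)
     + (f3 u * v u) * (g3 w * v w) + (f4 u * v u) * (g4 w * v w))"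
    by (simp only: sum_product sum.distrib)
  also have "\<dots> = ?L" by (intro sum.cong refl) (simp add: algebra_simps)
  finally show ?thesis by simp
qed

lemma rowsum:
  fixes v :: "nat \<times> nat \<Rightarrow> real"
  assumes "i < n"
  shows "(\<Sum>u\<in>{..<n}\<times>{..<n}. of_bool (fst u = i) * v u) = (\<Sum>b<n. v (i,b))"
proof -
  have "(\<Sum>u\<in>{..<n}\<times>{..<n}. of_bool (fst u = i) * v u) = (\<Sum>a<n. \<Sum>b<n. of_bool (a = i) * v (a,b))"
    by (simp only: sum.cartesian_product case_prod_unfold prod.collapse fst_conv snd_conv)
  also have "\<dots> = (\<Sum>a<n. if a = i then (\<Sum>b<n. v (a,b)) else 0)"
    by (intro sum.cong refl) auto
  also have "\<dots> = (\<Sum>b<n. v (i,b))" using assms by (simp add: sum.delta')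
  finally show ?thesis .
qed

lemma colsum:
  fixes v :: "nat \<times> nat \<Rightarrow> real"
  assumes "j < n"
  shows "(\<Sum>u\<in>{..<n}\<times>{..<n}. of_bool (snd u = j) * v u) = (\<Sum>a<n. v (a,j))"
proof -
  have "(\<Sum>u\<in>{..<n}\<times>{..<n}. of_bool (snd u = j) * v u) = (\<Sum>a<n. \<Sum>b<n. of_bool (b = j) * v (a,b))"
    by (simp only: sum.cartesian_product case_prod_unfold prod.collapse fst_conv snd_conv)
  also have "\<dots> = (\<Sum>b<n. \<Sum>a<n. of_bool (b = j) * v (a,b))"
    by (rule sum.swap)
  also have "\<dots> = (\<Sum>b<n. if b = j then (\<Sum>a<n. v (a,b)) else 0)"
    by (intro sum.cong refl) auto
  also have "\<dots> = (\<Sum>a<n. v (a,j))" using assms by (simp add: sum.delta')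
  finally show ?thesis .
qed

lemma disj_ind:
  assumes "finite P" "\<forall>B1\<in>P. \<forall>B2\<in>P. B1 \<noteq> B2 \<longrightarrow> B1 \<inter> B2 = {}"
  shows "(of_bool (z \<in> \<Union>P) :: real) = (\<Sum>B\<in>P. of_bool (z \<in> B))"
proof (cases "z \<in> \<Union>P")
  case True
  then obtain B0 where B0: "B0 \<in> P" "z \<in> B0" by auto
  have "(\<Sum>B\<in>P. (of_bool (z \<in> B)::real)) = (\<Sum>B\<in>P. if B = B0 then 1 else 0)"
    by (rule sum.cong) (use assms B0 in auto)
  also have "\<dots> = 1" using B0 assms(1) by (simp add: sum.delta')
  finally show ?thesis using True by simp
next
  case False
  then show ?thesis by auto
qed

lemma sum_I_prod:
  fixes v :: "nat \<times> nat \<Rightarrow> real"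
  shows "(\<Sum>u\<in>{..<n}\<times>{..<n}. v u) = (\<Sum>a<n. \<Sum>b<n. v (a,b))"
  by (simp add: sum.cartesian_product)

lemma ind_times: "B = F1 \<times> F2 \<Longrightarrow> (of_bool ((a,b) \<in> B)::real) = of_bool (a \<in> F1) * of_bool (b \<in> F2)"
  by simp

lemma main_bound:
  assumes n2: "n \<ge> 2" and bp: "block_partition n P"
  shows "(n-1)^2 + 1 \<le> 2 * card P"
proof (rule ccontr)
  assume contra: "\<not> ?thesis"
  from bp have finP: "finite P" and blk: "\<forall>B\<in>P. is_block n B"
    and dis: "\<forall>B1\<in>P. \<forall>B2\<in>P. B1 \<noteq> B2 \<longrightarrow> B1 \<inter> B2 = {}"
    and un: "\<Union>P = Kn_edges n \<times> Kn_edges n"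
    unfolding block_partition_def by auto
  have "\<forall>B\<in>P. \<exists>h. fst h \<inter> fst (snd h) = {} \<and> fst (snd (snd h)) \<inter> snd (snd (snd h)) = {}
     \<and> B = bip_edges (fst h) (fst (snd h)) \<times> bip_edges (fst (snd (snd h))) (snd (snd (snd h)))"
  proof
    fix B assume "B \<in> P"
    with blk obtain F1 F2 where F: "is_cbs n F1" "is_cbs n F2" "B = F1 \<times> F2"
      unfolding is_block_def by blast
    from F(1) obtain X1 Y1 where XY1: "X1 \<inter> Y1 = {}" "F1 = bip_edges X1 Y1"
      unfolding is_cbs_def by blast
    from F(2) obtain X2 Y2 where XY2: "X2 \<inter> Y2 = {}" "F2 = bip_edges X2 Y2"
      unfolding is_cbs_def by blast
    show "\<exists>h. fst h \<inter> fst (snd h) = {} \<and> fst (snd (snd h)) \<inter> snd (snd (snd h)) = {}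
     \<and> B = bip_edges (fst h) (fst (snd h)) \<times> bip_edges (fst (snd (snd h))) (snd (snd (snd h)))"
      using F(3) XY1 XY2 by (intro exI[of _ "(X1,Y1,X2,Y2)"]) simp
  qed
  from bchoice[OF this] obtain h where h: "\<forall>B\<in>P. fst (h B) \<inter> fst (snd (h B)) = {} \<and> fst (snd (snd (h B))) \<inter> snd (snd (snd (h B))) = {}
     \<and> B = bip_edges (fst (h B)) (fst (snd (h B))) \<times> bip_edges (fst (snd (snd (h B)))) (snd (snd (snd (h B))))"
    by (elim exE) (erule that)
  define X1 where "X1 = (\<lambda>B. fst (h B))"
  define Y1 where "Y1 = (\<lambda>B. fst (snd (h B)))"
  define X2 where "X2 = (\<lambda>B. fst (snd (snd (h B))))"
  define Y2 where "Y2 = (\<lambda>B. snd (snd (snd (h B))))"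
  have hB: "X1 B \<inter> Y1 B = {} \<and> X2 B \<inter> Y2 B = {} \<and> B = bip_edges (X1 B) (Y1 B) \<times> bip_edges (X2 B) (Y2 B)"
    if "B \<in> P" for B
    unfolding X1_def Y1_def X2_def Y2_def by (rule bspec[OF h that])
  define I where "I = {..<n} \<times> {..<n}"
  define ib :: "nat set \<Rightarrow> nat \<Rightarrow> real" where "ib X a = of_bool (a \<in> X)" for X a
  define fa where "fa B = (\<lambda>u::nat\<times>nat. ib (X1 B) (fst u) * ib (X2 B) (snd u))" for B
  define fc where "fc B = (\<lambda>u::nat\<times>nat. ib (X1 B) (fst u) * ib (Y2 B) (snd u))" for B
  define gb where "gb B = (\<lambda>u::nat\<times>nat. ib (Y1 B) (fst u) * ib (Y2 B) (snd u))" for B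
  define gd where "gd B = (\<lambda>u::nat\<times>nat. ib (Y1 B) (fst u) * ib (X2 B) (snd u))" for B
  define rowf where "rowf i = (\<lambda>u::nat\<times>nat. (of_bool (fst u = i) - of_bool (fst u = 0) :: real))" for i
  define colf where "colf j = (\<lambda>u::nat\<times>nat. (of_bool (snd u = j) - of_bool (snd u = 0) :: real))" for j
  define C where "C = fa ` P \<union> fc ` P \<union> rowf ` {1..<n} \<union> colf ` {1..<n}"
  have finC: "finite C" using finP by (simp add: C_def)
  have "card C \<le> card (fa ` P) + card (fc ` P) + card (rowf ` {1..<n}) + card (colf ` {1..<n})"
    using card_Un_le[of "fa ` P \<union> fc ` P \<union> rowf ` {1..<n}" "colf ` {1..<n}"]
      card_Un_le[of "fa ` P \<union> fc ` P" "rowf ` {1..<n}"] card_Un_le[of "fa ` P" "fc ` P"]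
    unfolding C_def by linarith
  moreover have "card (fa ` P) \<le> card P" "card (fc ` P) \<le> card P"
    "card (rowf ` {1..<n}) \<le> n - 1" "card (colf ` {1..<n}) \<le> n - 1"
    using card_image_le[OF finP] card_image_le[of "{1..<n}"] by auto
  ultimately have cC: "card C \<le> 2 * card P + 2 * (n - 1)" by linarith
  have cardI: "card I = n^2" by (simp add: I_def power2_eq_square)
  obtain m where nm: "n = Suc m" using n2 by (cases n) auto
  have "card C < card I"
    using cC contra unfolding cardI nm by (simp add: power2_eq_square algebra_simps)
  obtain cs where cs: "set cs = C" "distinct cs" using finite_distinct_list[OF finC] by blast
  have "length cs < card I" using cs distinct_card \<open>card C < card I\<close> by metis
  from underdet[OF _ this] obtain v where v1: "\<exists>j\<in>I. v j \<noteq> 0"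
    and v2: "\<forall>c\<in>C. (\<Sum>j\<in>I. c j * v j) = 0"
    using cs by (auto simp: I_def)
  define R where "R i = (\<Sum>b<n. v (i,b))" for i
  define Cc where "Cc j = (\<Sum>a<n. v (a,j))" for j
  have rs: "(\<Sum>u\<in>I. of_bool (fst u = i) * v u) = R i" if "i < n" for i
    using rowsum[OF that, of v] by (simp add: I_def R_def)
  have cls: "(\<Sum>u\<in>I. of_bool (snd u = j) * v u) = Cc j" if "j < n" for j
    using colsum[OF that, of v] by (simp add: I_def Cc_def)
  have n0: "0 < n" using n2 by simp
  have Ri: "R i = R 0" if "i < n" for i
  proof (cases "i = 0")
    case False
    then have "rowf i \<in> C" using that by (auto simp: C_def)
    with v2 have "(\<Sum>u\<in>I. (of_bool (fst u = i) - of_bool (fst u = 0)) * v u) = 0"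
      by (auto simp: rowf_def)
    then have "(\<Sum>u\<in>I. of_bool (fst u = i) * v u) - (\<Sum>u\<in>I. of_bool (fst u = 0) * v u) = 0"
      by (simp add: left_diff_distrib sum_subtractf)
    then show ?thesis using rs[OF that] rs[OF n0] by simp
  qed simp
  have Cj: "Cc j = Cc 0" if "j < n" for j
  proof (cases "j = 0")
    case False
    then have "colf j \<in> C" using that by (auto simp: C_def)
    with v2 have "(\<Sum>u\<in>I. (of_bool (snd u = j) - of_bool (snd u = 0)) * v u) = 0"
      by (auto simp: colf_def)
    then have "(\<Sum>u\<in>I. of_bool (snd u = j) * v u) - (\<Sum>u\<in>I. of_bool (snd u = 0) * v u) = 0"
      by (simp add: left_diff_distrib sum_subtractf)
    then show ?thesis using cls[OF that] cls[OF n0] by simp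
  qed simp
  define Stot where "Stot = (\<Sum>u\<in>I. v u)"
  have S1: "Stot = real n * R 0"
  proof -
    have "Stot = (\<Sum>i<n. R i)" unfolding Stot_def I_def R_def by (rule sum_I_prod)
    also have "\<dots> = (\<Sum>i<n. R 0)" by (rule sum.cong) (auto intro: Ri)
    finally show ?thesis by simp
  qed
  have S2: "Stot = real n * Cc 0"
  proof -
    have "Stot = (\<Sum>a<n. \<Sum>b<n. v (a,b))" unfolding Stot_def I_def by (rule sum_I_prod)
    also have "\<dots> = (\<Sum>j<n. Cc j)" unfolding Cc_def by (rule sum.swap)
    also have "\<dots> = (\<Sum>j<n. Cc 0)" by (rule sum.cong) (auto intro: Cj)
    finally show ?thesis by simp
  qed
  define r where "r = R 0"
  have Cr: "Cc 0 = r" using S1 S2 n0 by (simp add: r_def)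
  define K where "K u w = (of_bool (fst u \<noteq> fst w \<and> snd u \<noteq> snd w) :: real)" for u w :: "nat \<times> nat"
  define Q where "Q = (\<Sum>u\<in>I. \<Sum>w\<in>I. v u * v w * K u w)"
  have inner: "(\<Sum>w\<in>I. v w * K u w) = Stot - r - r + v u" if "u \<in> I" for u
  proof -
    have un': "fst u < n" "snd u < n" using that by (auto simp: I_def)
    have Keq: "K u w = 1 - of_bool (fst w = fst u) - of_bool (snd w = snd u) + of_bool (w = u)" for w
      by (cases u; cases w) (auto simp: K_def)
    have "(\<Sum>w\<in>I. v w * K u w) = (\<Sum>w\<in>I. v w - of_bool (fst w = fst u) * v w
        - of_bool (snd w = snd u) * v w + of_bool (w = u) * v w)"
      unfolding Keq by (intro sum.cong refl) (simp add: algebra_simps)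
    also have "\<dots> = (\<Sum>w\<in>I. v w) - (\<Sum>w\<in>I. of_bool (fst w = fst u) * v w)
        - (\<Sum>w\<in>I. of_bool (snd w = snd u) * v w) + (\<Sum>w\<in>I. of_bool (w = u) * v w)"
      by (simp only: sum.distrib sum_subtractf)
    also have "(\<Sum>w\<in>I. of_bool (w = u) * v w) = v u"
    proof -
      have "(\<Sum>w\<in>I. of_bool (w = u) * v w) = (\<Sum>w\<in>I. if w = u then v w else 0)"
        by (rule sum.cong) auto
      also have "\<dots> = v u" using that by (simp add: sum.delta' I_def)
      finally show ?thesis .
    qed
    finally show ?thesis using rs[OF un'(1)] cls[OF un'(2)] Ri[OF un'(1)] Cj[OF un'(2)] Cr
      by (simp add: Stot_def r_def)
  qed
  have "Q = (\<Sum>u\<in>I. v u * (Stot - r - r + v u))"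
    unfolding Q_def
  proof (rule sum.cong[OF refl])
    fix u assume u: "u \<in> I"
    have "(\<Sum>w\<in>I. v u * v w * K u w) = v u * (\<Sum>w\<in>I. v w * K u w)"
      by (simp add: sum_distrib_left mult.assoc)
    also have "\<dots> = v u * (Stot - r - r + v u)" by (simp only: inner[OF u])
    finally show "(\<Sum>w\<in>I. v u * v w * K u w) = v u * (Stot - r - r + v u)" .
  qed
  also have "\<dots> = (\<Sum>u\<in>I. (Stot - r - r) * v u + v u * v u)"
    by (intro sum.cong refl) (simp add: algebra_simps)
  also have "\<dots> = (Stot - r - r) * Stot + (\<Sum>u\<in>I. v u * v u)"
    by (simp only: sum.distrib sum_distrib_left Stot_def)
  finally have Qeq: "Q = (real n * r - 2 * r) * (real n * r) + (\<Sum>u\<in>I. v u * v u)"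
    using S1 by (simp add: r_def)
  have "0 < (\<Sum>u\<in>I. v u * v u)"
  proof -
    from v1 obtain j where "j \<in> I" "v j \<noteq> 0" by blast
    then show ?thesis by (intro sum_pos2[of I j]) (auto simp: I_def zero_less_mult_iff mult_less_0_iff)
  qed
  moreover have "0 \<le> (real n * r - 2 * r) * (real n * r)"
  proof -
    have e: "(real n * r - 2 * r) * (real n * r) = (real n - 2) * real n * (r * r)" by (simp add: algebra_simps)
    have "0 \<le> real n - 2" using n2 by simp
    then have "0 \<le> (real n - 2) * real n * (r * r)" by (rule mult_nonneg_nonneg[OF mult_nonneg_nonneg]) auto
    then show ?thesis by (simp only: e)
  qed
  ultimately have Qpos: "Q > 0" using Qeq by linarith
  have Kdec: "K u w = (\<Sum>B\<in>P. of_bool (({fst u, fst w}, {snd u, snd w}) \<in> B))" if "u \<in> I" "w \<in> I" for u w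
  proof -
    have "K u w = of_bool (({fst u, fst w}, {snd u, snd w}) \<in> \<Union>P)"
      using that by (auto simp: K_def un kn_mem I_def)
    then show ?thesis using disj_ind[OF finP dis] by simp
  qed
  have "Q = (\<Sum>u\<in>I. \<Sum>w\<in>I. \<Sum>B\<in>P. v u * v w * of_bool (({fst u, fst w}, {snd u, snd w}) \<in> B))"
    unfolding Q_def by (intro sum.cong refl) (simp add: Kdec sum_distrib_left)
  also have "\<dots> = (\<Sum>u\<in>I. \<Sum>B\<in>P. \<Sum>w\<in>I. v u * v w * of_bool (({fst u, fst w}, {snd u, snd w}) \<in> B))"
    by (intro sum.cong refl sum.swap)
  also have "\<dots> = (\<Sum>B\<in>P. \<Sum>u\<in>I. \<Sum>w\<in>I. v u * v w * of_bool (({fst u, fst w}, {snd u, snd w}) \<in> B))"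
    by (rule sum.swap)
  also have "\<dots> = 0"
  proof (rule sum.neutral, rule ballI)
    fix B assume B: "B \<in> P"
    note hb = hB[OF B]
    have ind: "(of_bool (({fst u, fst w}, {snd u, snd w}) \<in> B) :: real)
      = fa B u * gb B w + fc B u * gd B w + gd B u * fc B w + gb B u * fa B w" for u w
    proof -
      have "(of_bool (({fst u, fst w}, {snd u, snd w}) \<in> B) :: real)
          = of_bool ({fst u, fst w} \<in> bip_edges (X1 B) (Y1 B)) * of_bool ({snd u, snd w} \<in> bip_edges (X2 B) (Y2 B))"
        by (rule ind_times[OF conjunct2[OF conjunct2[OF hb]]])
      also have "\<dots> = fa B u * gb B w + fc B u * gd B w + gd B u * fc B w + gb B u * fa B w"
        by (simp add: bip_ind[OF conjunct1[OF hb]] bip_ind[OF conjunct1[OF conjunct2[OF hb]]] fa_def fc_def gb_def gd_def ib_def algebra_simps)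
      finally show ?thesis .
    qed
    have A0: "(\<Sum>u\<in>I. fa B u * v u) = 0" using v2 B by (auto simp: C_def)
    have C0: "(\<Sum>u\<in>I. fc B u * v u) = 0" using v2 B by (auto simp: C_def)
    show "(\<Sum>u\<in>I. \<Sum>w\<in>I. v u * v w * of_bool (({fst u, fst w}, {snd u, snd w}) \<in> B)) = 0"
      unfolding ind quad4 A0 C0 by simp
  qed
  finally show False using Qpos by simp
qed

lemma bip_single: "bip_edges {x} {y} = {{x,y}}" by (auto simp: bip_edges_def)

lemma exists_partition: "\<exists>P. block_partition n P"
proof -
  define P where "P = (\<lambda>(e,f). {(e,f)}) ` (Kn_edges n \<times> Kn_edges n)"
  have fK: "finite (Kn_edges n)"
    by (rule finite_subset[of _ "Pow {..<n}"]) (auto simp: Kn_edges_def)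
  have cbs: "is_cbs n {e}" if "e \<in> Kn_edges n" for e
  proof -
    from that obtain x y where "x < n" "y < n" "x \<noteq> y" "e = {x,y}" by (auto simp: Kn_edges_def)
    then show ?thesis unfolding is_cbs_def
      by (intro exI[of _ "{x}"] exI[of _ "{y}"]) (auto simp: bip_single)
  qed
  have "block_partition n P"
    unfolding block_partition_def
  proof (intro conjI ballI impI)
    show "finite P" using fK by (simp add: P_def)
    fix B assume "B \<in> P"
    then obtain e f where "e \<in> Kn_edges n" "f \<in> Kn_edges n" "B = {e} \<times> {f}" by (auto simp: P_def)
    then show "is_block n B" unfolding is_block_def using cbs by blast
  next
    fix B1 B2 assume "B1 \<in> P" "B2 \<in> P" "B1 \<noteq> B2"
    then show "B1 \<inter> B2 = {}" by (auto simp: P_def)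
  next
    show "\<Union>P = Kn_edges n \<times> Kn_edges n" by (auto simp: P_def)
  qed
  then show ?thesis by blast
qed

theorem mainTheorem9:
  fixes n :: nat
  assumes "n \<ge> 2"
  shows "\<lceil>(real ((n - 1)^2) + 1) / 2\<rceil> \<le> int (g n)"
proof -
  have "\<exists>P. block_partition n P \<and> card P = g n"
    unfolding g_def by (rule LeastI_ex) (use exists_partition[of n] in blast)
  then obtain P where P: "block_partition n P" "card P = g n" by blast
  have "(n-1)^2 + 1 \<le> 2 * card P" by (rule main_bound[OF assms P(1)])
  then have "(n-1)^2 + 1 \<le> 2 * g n" unfolding P(2) .
  then have "real ((n-1)^2 + 1) \<le> real (2 * g n)" by (simp only: of_nat_le_iff)
  then have "real ((n-1)^2) + 1 \<le> 2 * real (g n)" by simp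
  then have "(real ((n - 1)^2) + 1) / 2 \<le> real_of_int (int (g n))" by simp
  then show ?thesis by (simp only: ceiling_le_iff)
qed

end
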